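(* Let $R$ be a generalized weakly Rickart $*$-ring. Then (1) for each $x\in R$ there exists $n\in\mathbb N$ such that $r(x^n)\cap (x^* )^nR=\{0\}$; and (2) the involution $*$ is weakly proper.
   Context: A $*$-ring is an associative ring $R$ with an involution $x\mapsto x^*$ (additive, $(xy)^*=y^*x^*$, $x^{**}=x$). A projection is an element $e$ with $e=e^*=e^2$. For $a\in R$, $r(a)=\{b\in R: ab=0\}$. A projection $e$ is a generalized right projection of $x$ if there exists $n\in\mathbb N$ with $x^ne=x^n$ and, for all $y\in R$, $x^ny=0$ implies $ey=0$. $R$ is a generalized weakly Rickart $*$-ring if every element has a generalized right projection. The involution is weakly proper if for every $x\in R$, $xx^*=0$ implies $x^n=0$ for some $n\in\mathbb N$. *)

theory Defs
  imports Main
begin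

(* Positive powers in a possibly non-unital ring: ppow x n = x^n for n >= 1
   (the value at n = 0 is irrelevant and never used). *)
fun ppow :: "'a::ring \<Rightarrow> nat \<Rightarrow> 'a" where
  "ppow x 0 = 0"
| "ppow x (Suc 0) = x"
| "ppow x (Suc (Suc n)) = ppow x (Suc n) * x"

definition star_ring :: "('a::ring \<Rightarrow> 'a) \<Rightarrow> bool" where
  "star_ring s \<longleftrightarrow> (\<forall>x y. s (x + y) = s x + s y) \<and> (\<forall>x y. s (x * y) = s y * s x)
     \<and> (\<forall>x. s (s x) = x)"

definition projection :: "('a::ring \<Rightarrow> 'a) \<Rightarrow> 'a \<Rightarrow> bool" where
  "projection s e \<longleftrightarrow> e = s e \<and> e = e * e"

definition rann :: "'a::ring \<Rightarrow> 'a set" where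
  "rann a = {b. a * b = 0}"

definition gen_right_projection :: "('a::ring \<Rightarrow> 'a) \<Rightarrow> 'a \<Rightarrow> 'a \<Rightarrow> bool" where
  "gen_right_projection s e x \<longleftrightarrow> projection s e \<and>
     (\<exists>n\<ge>1. ppow x n * e = ppow x n \<and> (\<forall>y. ppow x n * y = 0 \<longrightarrow> e * y = 0))"

definition gen_weakly_rickart :: "('a::ring \<Rightarrow> 'a) \<Rightarrow> bool" where
  "gen_weakly_rickart s \<longleftrightarrow> star_ring s \<and> (\<forall>x. \<exists>e. gen_right_projection s e x)"

definition weakly_proper :: "('a::ring \<Rightarrow> 'a) \<Rightarrow> bool" where
  "weakly_proper s \<longleftrightarrow> (\<forall>x. x * s x = 0 \<longrightarrow> (\<exists>n\<ge>1. ppow x n = 0))"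

end

theory Submission
  imports Defs
begin

lemma ppow_comm: "x * ppow x n = ppow x n * (x::'a::ring)"
  by (induction x n rule: ppow.induct) (simp_all add: mult.assoc[symmetric])

lemma ppow_ann: "x * y = 0 \<Longrightarrow> n \<ge> 1 \<Longrightarrow> ppow x n * y = (0::'a::ring)"
  by (induction x n rule: ppow.induct) (simp_all add: mult.assoc)

lemma star_zero: "star_ring s \<Longrightarrow> s 0 = 0"
  unfolding star_ring_def by (metis add_cancel_right_right add_0)

lemma star_ppow: "star_ring s \<Longrightarrow> s (ppow x n) = ppow (s x) n"
proof (induction x n rule: ppow.induct)
  case (1 x) then show ?case by (simp add: star_zero)
next
  case (2 x) then show ?case by simp
next
  case (3 x n)
  have "s (ppow x (Suc (Suc n))) = s x * s (ppow x (Suc n))"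
    using 3(2) by (simp add: star_ring_def)
  also have "\<dots> = ppow (s x) (Suc (Suc n))" using 3 by (simp add: ppow_comm)
  finally show ?case .
qed

theorem mainTheorem10:
  fixes s :: "'a::ring \<Rightarrow> 'a"
  assumes "gen_weakly_rickart s"
  shows "(\<forall>x. \<exists>n\<ge>1. rann (ppow x n) \<inter> {ppow (s x) n * z | z. True} = {0})
         \<and> weakly_proper s"
proof
  have sr: "star_ring s" using assms by (simp add: gen_weakly_rickart_def)
  have sm: "\<And>a b. s (a * b) = s b * s a" using sr by (simp add: star_ring_def)
  have ss: "\<And>a. s (s a) = a" using sr by (simp add: star_ring_def)
  show "\<forall>x. \<exists>n\<ge>1. rann (ppow x n) \<inter> {ppow (s x) n * z | z. True} = {0}"
  proof
    fix x
    obtain e n where pe: "projection s e" and n: "n \<ge> 1" and xe: "ppow x n * e = ppow x n"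
      and ann: "\<And>y. ppow x n * y = 0 \<Longrightarrow> e * y = 0"
      using assms unfolding gen_weakly_rickart_def gen_right_projection_def by blast
    have es: "s e = e" using pe by (simp add: projection_def)
    have ex: "e * ppow (s x) n = ppow (s x) n"
      using arg_cong[where f=s, OF xe] by (simp add: sm es star_ppow[OF sr])
    have "rann (ppow x n) \<inter> {ppow (s x) n * z | z. True} = {0}"
    proof (rule set_eqI, rule iffI)
      fix w assume "w \<in> rann (ppow x n) \<inter> {ppow (s x) n * z | z. True}"
      then obtain z where w: "w = ppow (s x) n * z" and "ppow x n * w = 0"
        by (auto simp: rann_def)
      then have "e * w = 0" using ann by blast
      moreover have "e * w = w" using ex w by (simp add: mult.assoc[symmetric])
      ultimately show "w \<in> {0}" by simp
    next
      fix w assume "w \<in> ({0}::'a set)"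
      then show "w \<in> rann (ppow x n) \<inter> {ppow (s x) n * z | z. True}"
        by (auto simp: rann_def intro!: exI[of _ 0])
    qed
    then show "\<exists>n\<ge>1. rann (ppow x n) \<inter> {ppow (s x) n * z | z. True} = {0}" using n by blast
  qed
  show "weakly_proper s"
    unfolding weakly_proper_def
  proof (intro allI impI)
    fix x assume xx: "x * s x = 0"
    obtain e n where pe: "projection s e" and n: "n \<ge> 1" and xe: "ppow x n * e = ppow x n"
      and ann: "\<And>y. ppow x n * y = 0 \<Longrightarrow> e * y = 0"
      using assms unfolding gen_weakly_rickart_def gen_right_projection_def by blast
    have es: "s e = e" using pe by (simp add: projection_def)
    have "e * s x = 0" using ann ppow_ann[OF xx n] by blast
    then have "s (e * s x) = 0" by (simp add: star_zero[OF sr])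
    then have "x * e = 0" by (simp add: sm ss es)
    then have "ppow x n * e = 0" using ppow_ann n by blast
    then show "\<exists>n\<ge>1. ppow x n = 0" using xe n by auto
  qed
qed

end
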